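(* In the setting below, let $(x_f,y_f,\theta_f)$ be any goal pose. Consider a $4\pi$-arc $LSL$ path reaching this goal pose whose travel time is minimal among all $4\pi$-arc $LSL$ paths reaching it. It satisfies $\alpha+\gamma<4\pi$. The same holds for $RSR$: a $4\pi$-arc $RSR$ path reaching the goal pose whose travel time is minimal among all $4\pi$-arc $RSR$ paths reaching it satisfies $\alpha+\gamma<4\pi$.
   Context: Setting: a vehicle moves in the plane at unit speed with minimum turning radius $r>0$, in a steady current $(w_x,w_y)$ with speed $v_w=\sqrt{w_x^2+w_y^2}\in(0,1)$. The start pose is $(0,0,0)$ and the goal pose is $(x_f,y_f,\theta_f)$ with $\theta_f\in[0,2\pi)$. An $LSL$ path has parameters $(\alpha,\beta,\gamma)$ with $\alpha,\gamma\ge0$ and $\beta\ge0$: a left arc of angle $\alpha$ of radius $r$, a straight segment of length $\beta$, and a left arc of angle $\gamma$, in the frame moving with the current. Its travel time is $T=r(\alpha+\gamma)+\beta$. It reaches the goal iff for some $k\in\mathbb{Z}$: $\alpha+\gamma=2k\pi+\theta_f$, $x_f-w_xT=r\sin\theta_f+\beta\cos\alpha$, and $y_f-w_yT=r(1-\cos\theta_f)+\beta\sin\alpha$. An $RSR$ path is the analogous path with right arcs, with $T=r(\alpha+\gamma)+\beta$. It reaches the goal iff for some $k\in\mathbb{Z}$: $-\alpha-\gamma=2k\pi+\theta_f$, $x_f-w_xT=-r\sin\theta_f+\beta\cos\alpha$, and $y_f-w_yT=-r(1-\cos\theta_f)-\beta\sin\alpha$. A path is a $4\pi$-arc path if $\alpha,\gamma\in[0,4\pi)$.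 *)

theory Defs
  imports Complex_Main
begin

definition travel_time :: "real \<Rightarrow> real \<Rightarrow> real \<Rightarrow> real \<Rightarrow> real" where
  "travel_time r \<alpha> \<beta> \<gamma> = r * (\<alpha> + \<gamma>) + \<beta>"

text \<open>The LSL path (alpha, beta, gamma) reaches the goal (xf, yf, thf) in current (wx, wy).\<close>
definition lsl_reaches :: "real \<Rightarrow> real \<Rightarrow> real \<Rightarrow> real \<Rightarrow> real \<Rightarrow> real \<Rightarrow> real \<Rightarrow> real \<Rightarrow> real \<Rightarrow> bool" where
  "lsl_reaches r wx wy xf yf thf \<alpha> \<beta> \<gamma> \<longleftrightarrow>
     \<alpha> \<ge> 0 \<and> \<beta> \<ge> 0 \<and> \<gamma> \<ge> 0 \<and>
     (\<exists>k::int. \<alpha> + \<gamma> = 2 * of_int k * pi + thf \<and>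
        xf - wx * travel_time r \<alpha> \<beta> \<gamma> = r * sin thf + \<beta> * cos \<alpha> \<and>
        yf - wy * travel_time r \<alpha> \<beta> \<gamma> = r * (1 - cos thf) + \<beta> * sin \<alpha>)"

definition rsr_reaches :: "real \<Rightarrow> real \<Rightarrow> real \<Rightarrow> real \<Rightarrow> real \<Rightarrow> real \<Rightarrow> real \<Rightarrow> real \<Rightarrow> real \<Rightarrow> bool" where
  "rsr_reaches r wx wy xf yf thf \<alpha> \<beta> \<gamma> \<longleftrightarrow>
     \<alpha> \<ge> 0 \<and> \<beta> \<ge> 0 \<and> \<gamma> \<ge> 0 \<and>
     (\<exists>k::int. - \<alpha> - \<gamma> = 2 * of_int k * pi + thf \<and>
        xf - wx * travel_time r \<alpha> \<beta> \<gamma> = - r * sin thf + \<beta> * cos \<alpha> \<and>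
        yf - wy * travel_time r \<alpha> \<beta> \<gamma> = - r * (1 - cos thf) - \<beta> * sin \<alpha>)"

definition four_pi_arc :: "real \<Rightarrow> real \<Rightarrow> bool" where
  "four_pi_arc \<alpha> \<gamma> \<longleftrightarrow> \<alpha> \<in> {0..<4*pi} \<and> \<gamma> \<in> {0..<4*pi}"

end

theory Submission
  imports Defs
begin

lemma exists_T:
  fixes Dx Dy wx wy S' T :: real
  assumes "S' < T - sqrt((Dx - wx*T)^2 + (Dy - wy*T)^2)"
  shows "\<exists>T'. S' \<le> T' \<and> T' < T \<and> T' - sqrt((Dx - wx*T')^2 + (Dy - wy*T')^2) = S'"
proof -
  let ?g = "\<lambda>t::real. t - sqrt((Dx - wx*t)^2 + (Dy - wy*t)^2)"
  have a: "?g S' \<le> S'" by simp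
  have "sqrt((Dx - wx*T)^2 + (Dy - wy*T)^2) \<ge> 0" by simp
  then have le: "S' \<le> T" using assms by linarith
  have "\<forall>x. S' \<le> x \<and> x \<le> T \<longrightarrow> isCont ?g x" by (intro allI impI) (intro continuous_intros)
  from IVT[of ?g S' S' T, OF a _ le this] assms obtain t where
    "S' \<le> t" "t \<le> T" "?g t = S'" by auto
  moreover have "t \<noteq> T" using assms \<open>?g t = S'\<close> by auto
  ultimately show ?thesis by (intro exI[of _ t]) auto
qed

lemma exists_angle:
  fixes a b :: real
  shows "\<exists>t. 0 \<le> t \<and> t < 2*pi \<and> sqrt(a^2+b^2) * cos t = a \<and> sqrt(a^2+b^2) * sin t = b"
proof (cases "a^2+b^2 = 0")
  case True
  then have "a = 0" "b = 0" by (auto simp: sum_power2_eq_zero_iff)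
  then show ?thesis by (intro exI[of _ 0]) auto
next
  case False
  let ?n = "sqrt(a^2+b^2)"
  have "a^2+b^2 \<ge> 0" by simp
  with False have "a^2+b^2 > 0" by linarith
  then have n: "?n > 0" by simp
  have "(a/?n)^2 + (b/?n)^2 = 1"
    using n False by (simp add: power_divide add_divide_distrib[symmetric] sum_power2_ge_zero)
  from sincos_total_2pi[OF this] obtain t where t: "0 \<le> t" "t < 2*pi" "a/?n = cos t" "b/?n = sin t" by blast
  have "?n * cos t = a" "?n * sin t = b" using t(3,4)[symmetric] n by (simp_all add: field_simps)
  then show ?thesis using t(1,2) by blast
qed

lemma norm_eq:
  fixes \<beta> c s :: real
  assumes "\<beta> \<ge> 0" "c^2 + s^2 = 1"
  shows "sqrt((\<beta>*c)^2 + (\<beta>*s)^2) = \<beta>"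
proof -
  have "(\<beta>*c)^2 + (\<beta>*s)^2 = \<beta>^2" using assms(2) by (simp add: power_mult_distrib algebra_simps flip: distrib_left)
  then show ?thesis using assms(1) by simp
qed

lemma lsl_part:
  fixes r wx wy xf yf thf \<alpha> \<beta> \<gamma> :: real
  assumes r: "r > 0"
    and R: "lsl_reaches r wx wy xf yf thf \<alpha> \<beta> \<gamma>" and F: "four_pi_arc \<alpha> \<gamma>"
    and opt: "\<forall>\<alpha>' \<beta>' \<gamma>'. lsl_reaches r wx wy xf yf thf \<alpha>' \<beta>' \<gamma>' \<and> four_pi_arc \<alpha>' \<gamma>' \<longrightarrow>
                travel_time r \<alpha> \<beta> \<gamma> \<le> travel_time r \<alpha>' \<beta>' \<gamma>'"
  shows "\<alpha> + \<gamma> < 4 * pi"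
proof (rule ccontr)
  assume "\<not> \<alpha> + \<gamma> < 4 * pi"
  then have A4: "\<alpha> + \<gamma> \<ge> 4*pi" by simp
  define A where "A = \<alpha> + \<gamma>"
  define T where "T = travel_time r \<alpha> \<beta> \<gamma>"
  define Dx where "Dx = xf - r * sin thf"
  define Dy where "Dy = yf - r * (1 - cos thf)"
  from R obtain k :: int where b0: "\<beta> \<ge> 0" and k: "A = 2 * of_int k * pi + thf"
    and ex: "Dx - wx * T = \<beta> * cos \<alpha>" and ey: "Dy - wy * T = \<beta> * sin \<alpha>"
    unfolding lsl_reaches_def A_def T_def Dx_def Dy_def by auto
  have TA: "T = r * A + \<beta>" unfolding T_def A_def travel_time_def by simp
  have A8: "A < 8*pi" using F unfolding four_pi_arc_def A_def by auto
  have "sqrt((Dx - wx*T)^2 + (Dy - wy*T)^2) = \<beta>"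
    unfolding ex ey by (rule norm_eq[OF b0]) simp
  then have "T - sqrt((Dx - wx*T)^2 + (Dy - wy*T)^2) = r * A" using TA by simp
  moreover have "r * (A - 2*pi) < r * A" using r by simp
  ultimately have "r * (A - 2*pi) < T - sqrt((Dx - wx*T)^2 + (Dy - wy*T)^2)" by simp
  from exists_T[OF this] obtain T' where T': "r * (A - 2*pi) \<le> T'" "T' < T"
    "T' - sqrt((Dx - wx*T')^2 + (Dy - wy*T')^2) = r * (A - 2*pi)" by blast
  define \<beta>' where "\<beta>' = T' - r * (A - 2*pi)"
  have b': "\<beta>' \<ge> 0" "sqrt((Dx - wx*T')^2 + (Dy - wy*T')^2) = \<beta>'" using T' unfolding \<beta>'_def by auto
  obtain a0 where a0: "0 \<le> a0" "a0 < 2*pi" "\<beta>' * cos a0 = Dx - wx*T'" "\<beta>' * sin a0 = Dy - wy*T'"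
    using exists_angle[of "Dx - wx*T'" "Dy - wy*T'"] b'(2) by auto
  define \<alpha>' where "\<alpha>' = (if A - 2*pi < 4*pi then a0 else a0 + 2*pi)"
  define \<gamma>' where "\<gamma>' = A - 2*pi - \<alpha>'"
  have cs: "cos \<alpha>' = cos a0" "sin \<alpha>' = sin a0" unfolding \<alpha>'_def by auto
  have ag: "0 \<le> \<alpha>'" "\<alpha>' < 4*pi" "0 \<le> \<gamma>'" "\<gamma>' < 4*pi"
    using a0 A4 A8 pi_gt_zero unfolding \<alpha>'_def \<gamma>'_def A_def by (auto split: if_splits)
  have tt: "travel_time r \<alpha>' \<beta>' \<gamma>' = T'" unfolding travel_time_def \<gamma>'_def \<beta>'_def by simp
  have "\<alpha>' + \<gamma>' = 2 * of_int (k - 1) * pi + thf" unfolding \<gamma>'_def using k by (simp add: algebra_simps)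
  moreover have "xf - wx * T' = r * sin thf + \<beta>' * cos \<alpha>'" using a0 cs unfolding Dx_def by simp
  moreover have "yf - wy * T' = r * (1 - cos thf) + \<beta>' * sin \<alpha>'" using a0 cs unfolding Dy_def by simp
  ultimately have "lsl_reaches r wx wy xf yf thf \<alpha>' \<beta>' \<gamma>'"
    unfolding lsl_reaches_def tt using ag b' by blast
  moreover have "four_pi_arc \<alpha>' \<gamma>'" unfolding four_pi_arc_def using ag by auto
  ultimately have "T \<le> T'" using opt tt unfolding T_def by metis
  with T' show False by simp
qed

lemma rsr_part:
  fixes r wx wy xf yf thf \<alpha> \<beta> \<gamma> :: real
  assumes r: "r > 0"
    and R: "rsr_reaches r wx wy xf yf thf \<alpha> \<beta> \<gamma>" and F: "four_pi_arc \<alpha> \<gamma>"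
    and opt: "\<forall>\<alpha>' \<beta>' \<gamma>'. rsr_reaches r wx wy xf yf thf \<alpha>' \<beta>' \<gamma>' \<and> four_pi_arc \<alpha>' \<gamma>' \<longrightarrow>
                travel_time r \<alpha> \<beta> \<gamma> \<le> travel_time r \<alpha>' \<beta>' \<gamma>'"
  shows "\<alpha> + \<gamma> < 4 * pi"
proof (rule ccontr)
  assume "\<not> \<alpha> + \<gamma> < 4 * pi"
  then have A4: "\<alpha> + \<gamma> \<ge> 4*pi" by simp
  define A where "A = \<alpha> + \<gamma>"
  define T where "T = travel_time r \<alpha> \<beta> \<gamma>"
  define Dx where "Dx = xf + r * sin thf"
  define Dy where "Dy = yf + r * (1 - cos thf)"
  from R obtain k :: int where b0: "\<beta> \<ge> 0" and k: "- A = 2 * of_int k * pi + thf"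
    and ex: "Dx - wx * T = \<beta> * cos \<alpha>" and ey: "Dy - wy * T = \<beta> * (- sin \<alpha>)"
    unfolding rsr_reaches_def A_def T_def Dx_def Dy_def by (auto simp: algebra_simps)
  have TA: "T = r * A + \<beta>" unfolding T_def A_def travel_time_def by simp
  have A8: "A < 8*pi" using F unfolding four_pi_arc_def A_def by auto
  have "sqrt((Dx - wx*T)^2 + (Dy - wy*T)^2) = \<beta>"
    unfolding ex ey by (rule norm_eq[OF b0]) simp
  then have "T - sqrt((Dx - wx*T)^2 + (Dy - wy*T)^2) = r * A" using TA by simp
  moreover have "r * (A - 2*pi) < r * A" using r by simp
  ultimately have "r * (A - 2*pi) < T - sqrt((Dx - wx*T)^2 + (Dy - wy*T)^2)" by simp
  from exists_T[OF this] obtain T' where T': "r * (A - 2*pi) \<le> T'" "T' < T"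
    "T' - sqrt((Dx - wx*T')^2 + (Dy - wy*T')^2) = r * (A - 2*pi)" by blast
  define \<beta>' where "\<beta>' = T' - r * (A - 2*pi)"
  have sq: "(- (Dy - wy*T'))^2 = (Dy - wy*T')^2" by (rule power2_minus)
  have b': "\<beta>' \<ge> 0" "sqrt((Dx - wx*T')^2 + (- (Dy - wy*T'))^2) = \<beta>'" using T' unfolding \<beta>'_def sq by auto
  obtain a0 where a0: "0 \<le> a0" "a0 < 2*pi" "\<beta>' * cos a0 = Dx - wx*T'" "\<beta>' * sin a0 = - (Dy - wy*T')"
    using exists_angle[of "Dx - wx*T'" "- (Dy - wy*T')"] b'(2) by auto
  define \<alpha>' where "\<alpha>' = (if A - 2*pi < 4*pi then a0 else a0 + 2*pi)"
  define \<gamma>' where "\<gamma>' = A - 2*pi - \<alpha>'"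
  have cs: "cos \<alpha>' = cos a0" "sin \<alpha>' = sin a0" unfolding \<alpha>'_def by auto
  have ag: "0 \<le> \<alpha>'" "\<alpha>' < 4*pi" "0 \<le> \<gamma>'" "\<gamma>' < 4*pi"
    using a0 A4 A8 pi_gt_zero unfolding \<alpha>'_def \<gamma>'_def A_def by (auto split: if_splits)
  have tt: "travel_time r \<alpha>' \<beta>' \<gamma>' = T'" unfolding travel_time_def \<gamma>'_def \<beta>'_def by simp
  have "- \<alpha>' - \<gamma>' = 2 * of_int (k + 1) * pi + thf" unfolding \<gamma>'_def using k by (simp add: algebra_simps)
  moreover have "xf - wx * T' = - r * sin thf + \<beta>' * cos \<alpha>'" using a0 cs unfolding Dx_def by simp
  moreover have "yf - wy * T' = - r * (1 - cos thf) - \<beta>' * sin \<alpha>'" using a0 cs unfolding Dy_def by simp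
  ultimately have "rsr_reaches r wx wy xf yf thf \<alpha>' \<beta>' \<gamma>'"
    unfolding rsr_reaches_def tt using ag b' by blast
  moreover have "four_pi_arc \<alpha>' \<gamma>'" unfolding four_pi_arc_def using ag by auto
  ultimately have "T \<le> T'" using opt tt unfolding T_def by metis
  with T' show False by simp
qed

theorem corollary2:
  fixes r wx wy xf yf thf :: real
  assumes "r > 0"
    and "0 < sqrt (wx^2 + wy^2)" and "sqrt (wx^2 + wy^2) < 1"
    and "0 \<le> thf" and "thf < 2 * pi"
  shows "(\<forall>\<alpha> \<beta> \<gamma>. lsl_reaches r wx wy xf yf thf \<alpha> \<beta> \<gamma> \<and> four_pi_arc \<alpha> \<gamma> \<and>
            (\<forall>\<alpha>' \<beta>' \<gamma>'. lsl_reaches r wx wy xf yf thf \<alpha>' \<beta>' \<gamma>' \<and> four_pi_arc \<alpha>' \<gamma>' \<longrightarrow>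
                travel_time r \<alpha> \<beta> \<gamma> \<le> travel_time r \<alpha>' \<beta>' \<gamma>')
          \<longrightarrow> \<alpha> + \<gamma> < 4 * pi)
       \<and> (\<forall>\<alpha> \<beta> \<gamma>. rsr_reaches r wx wy xf yf thf \<alpha> \<beta> \<gamma> \<and> four_pi_arc \<alpha> \<gamma> \<and>
            (\<forall>\<alpha>' \<beta>' \<gamma>'. rsr_reaches r wx wy xf yf thf \<alpha>' \<beta>' \<gamma>' \<and> four_pi_arc \<alpha>' \<gamma>' \<longrightarrow>
                travel_time r \<alpha> \<beta> \<gamma> \<le> travel_time r \<alpha>' \<beta>' \<gamma>')
          \<longrightarrow> \<alpha> + \<gamma> < 4 * pi)"
  using lsl_part[OF assms(1)] rsr_part[OF assms(1)] by blast

end
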